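(* Let $F$ be a Ferrers diagram of semiperimeter $n+1$, $T\in\mathsf{EWtab}(F)$ and $S=S(T)$ its supplementary tableau, with $\mathsf{CanonTop}(T)=(U^{(0)}_T,V^{(1)}_T,U^{(1)}_T,V^{(2)}_T,\ldots)$. (a) If $j\in U^{(\ell)}_T$ and $k\in\mathsf{cols}(F)$ with $j<k$, then $k\in V^{(\ell)}_T$ if and only if $S_{jk}=0$ and this $0$ is not a cornersupport entry. (b) If $j\in V^{(\ell)}_T$ and $k\in\mathsf{rows}(F)$ with $k<j$, then $k\in U^{(\ell-1)}_T$ if and only if $S_{kj}=1$ and this $1$ is not a cornersupport entry.
   Context: Ferrers diagrams and graphs: a Ferrers diagram $F$ (English convention) of semiperimeter $n+1$ has rows and columns labeled by $0,\ldots,n$: the $n+1$ unit steps of its south-east boundary path, traversed from top-right to bottom-left, are labeled $0,\ldots,n$; a vertical step labels the row it bounds, a horizontal step the column it bounds (top row labeled $0$). $\mathsf{rows}(F)$, $\mathsf{cols}(F)$ are the label sets; $F$ has a cell in row $i$, column $j$ iff $i<j$. $G(F)$ has vertex set $\{0,\ldots,n\}$ with edges $\{i,j\}$ for $i\in\mathsf{rows}(F)$, $j\in\mathsf{cols}(F)$, $i<j$. Sandpile model on $G(F)$ with sink $0$: configurations $c\in\mathbb{N}^n$; non-sink $v$ unstable if $c_v\ge\deg(v)$; toppling sends one grain to each neighbour (grains to $0$ disappear); toppling the sink adds one grain to each neighbour of $0$. Recurrent: stable configurations obtainable from $c_v=\deg(v)-1$ by adding grains and stabilizing; $\mathsf{Rec}^{\mathsf{min}}$: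 recurrent configurations of minimal total grain count. Canonical toppling of a recurrent $c$: topple the sink ($U^{(0)}_c=\{0\}$), then alternately topple simultaneously all unstable vertices in $\mathsf{cols}(F)$ ($V^{(1)}_c$), all unstable in $\mathsf{rows}(F)$ ($U^{(1)}_c$), etc.; $\mathsf{CanonTop}(c)=(U^{(0)}_c,V^{(1)}_c,U^{(1)}_c,\ldots)$ is an ordered partition of $\{0,\ldots,n\}$. EW-tableaux: a $0/1$-filling $T$ of $F$ ($T_{ij}$ = entry in row $i$, column $j$) such that the top row is all 1s, every other row contains a 0, and no rectangle has 0s in two diagonally opposite corners and 1s in the other two; $\mathsf{EWtab}(F)$ is their set. $\phi_{TC}(T)$ is the configuration with $c_i$ = number of 1s in row $i$ ($i\in\mathsf{rows}(F)$) and $c_i$ = number of 0s in column $i$ ($i\in\mathsf{cols}(F)$); it is a minimal recurrent configuration. Set $\mathsf{CanonTop}(T):=\mathsf{CanonTop}(\phi_{TC}(T))$, with blocks $U^{(i)}_T,V^{(i)}_T$. Supplementary tableau: $S=S(T)$ is the rectangular $|\mathsf{rows}(F)|\times|\mathsf{cols}(F)|$ array with $S_{ij}=1$ if $i\in\mathsf{rows}(F)$ appears in an earlier block of $\mathsf{CanonTop}(T)$ than $j\in\mathsf{cols}(F)$, and $S_{ij}=0$ otherwise; it agrees with $T$ on the cells of $F$. Cornersupport: an entry $x\in\{0,1\}$ at position $(j,k)$ ($j$ a row, $k$ a column) is a cornersupport entry iff there exist a row $j'\ne j$ and a column $k'\ne k$ with $S_{j'k'}\ne x$ and $S_{j'k}=S_{jk'}=x$;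 one then says $S_{j'k'}$ induces $(j,k)$ to be a cornersupport. *)

theory Defs
  imports Main
begin

text \<open>A Ferrers diagram of semiperimeter n+1 is encoded by its set R of row labels
  (subset of {0..n}); the column labels are the remaining labels. The boundary path
  starts with a vertical step (top row labelled 0) and ends with a horizontal step
  (leftmost column labelled n).\<close>

definition ferrers :: "nat \<Rightarrow> nat set \<Rightarrow> bool" where
  "ferrers n R \<longleftrightarrow> R \<subseteq> {0..n} \<and> 0 \<in> R \<and> n \<notin> R"

definition cols :: "nat \<Rightarrow> nat set \<Rightarrow> nat set" where
  "cols n R = {0..n} - R"

definition is_cell :: "nat \<Rightarrow> nat set \<Rightarrow> nat \<Rightarrow> nat \<Rightarrow> bool" where
  "is_cell n R i j \<longleftrightarrow> i \<in> R \<and> j \<in> cols n R \<and> i < j"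

definition adj :: "nat \<Rightarrow> nat set \<Rightarrow> nat \<Rightarrow> nat \<Rightarrow> bool" where
  "adj n R u v \<longleftrightarrow> is_cell n R u v \<or> is_cell n R v u"

definition deg :: "nat \<Rightarrow> nat set \<Rightarrow> nat \<Rightarrow> nat" where
  "deg n R v = card {w \<in> {0..n}. adj n R w v}"

text \<open>Configurations are functions nat => nat; only the values at 1..n matter.\<close>

definition sink_topple :: "nat \<Rightarrow> nat set \<Rightarrow> (nat \<Rightarrow> nat) \<Rightarrow> (nat \<Rightarrow> nat)" where
  "sink_topple n R c = (\<lambda>v. c v + (if adj n R 0 v then 1 else 0))"

definition topple_set :: "nat \<Rightarrow> nat set \<Rightarrow> nat set \<Rightarrow> (nat \<Rightarrow> nat) \<Rightarrow> (nat \<Rightarrow> nat)" where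
  "topple_set n R A c = (\<lambda>v. c v - (if v \<in> A then deg n R v else 0) + card {w \<in> A. adj n R w v})"

primrec canon_step :: "nat \<Rightarrow> nat set \<Rightarrow> (nat \<Rightarrow> nat) \<Rightarrow> nat \<Rightarrow> (nat \<Rightarrow> nat) \<times> nat set" where
  "canon_step n R c 0 = (sink_topple n R c, {0})"
| "canon_step n R c (Suc k) =
     (let d = fst (canon_step n R c k);
          A = {v \<in> (if even k then cols n R else R - {0}). deg n R v \<le> d v}
      in (topple_set n R A d, A))"

text \<open>CanonTop(c) = (U^(0), V^(1), U^(1), V^(2), ...).\<close>
definition canon_U :: "nat \<Rightarrow> nat set \<Rightarrow> (nat \<Rightarrow> nat) \<Rightarrow> nat \<Rightarrow> nat set" where
  "canon_U n R c l = snd (canon_step n R c (2 * l))"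

definition canon_V :: "nat \<Rightarrow> nat set \<Rightarrow> (nat \<Rightarrow> nat) \<Rightarrow> nat \<Rightarrow> nat set" where
  "canon_V n R c l = (if l = 0 then {} else snd (canon_step n R c (2 * l - 1)))"

definition block_index :: "nat \<Rightarrow> nat set \<Rightarrow> (nat \<Rightarrow> nat) \<Rightarrow> nat \<Rightarrow> nat" where
  "block_index n R c v = (LEAST k. v \<in> snd (canon_step n R c k))"

definition EWtab :: "nat \<Rightarrow> nat set \<Rightarrow> (nat \<Rightarrow> nat \<Rightarrow> nat) set" where
  "EWtab n R = {T.
     (\<forall>i j. is_cell n R i j \<longrightarrow> T i j \<in> {0, 1}) \<and>
     (\<forall>j \<in> cols n R. T 0 j = 1) \<and>
     (\<forall>i \<in> R - {0}. \<exists>j. is_cell n R i j \<and> T i j = 0) \<and>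
     (\<forall>i1 i2 j1 j2. is_cell n R i1 j1 \<and> is_cell n R i1 j2 \<and> is_cell n R i2 j1 \<and>
        is_cell n R i2 j2 \<and> i1 \<noteq> i2 \<and> j1 \<noteq> j2 \<longrightarrow>
        \<not> (T i1 j1 = 0 \<and> T i2 j2 = 0 \<and> T i1 j2 = 1 \<and> T i2 j1 = 1))}"

definition phi_TC :: "nat \<Rightarrow> nat set \<Rightarrow> (nat \<Rightarrow> nat \<Rightarrow> nat) \<Rightarrow> (nat \<Rightarrow> nat)" where
  "phi_TC n R T = (\<lambda>v.
     if v \<in> R then card {j. is_cell n R v j \<and> T v j = 1}
     else if v \<in> cols n R then card {i. is_cell n R i v \<and> T i v = 0}
     else 0)"

definition suppl :: "nat \<Rightarrow> nat set \<Rightarrow> (nat \<Rightarrow> nat \<Rightarrow> nat) \<Rightarrow> nat \<Rightarrow> nat \<Rightarrow> nat" where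
  "suppl n R T i j =
     (if block_index n R (phi_TC n R T) i < block_index n R (phi_TC n R T) j then 1 else 0)"

definition cornersupport :: "nat \<Rightarrow> nat set \<Rightarrow> (nat \<Rightarrow> nat \<Rightarrow> nat) \<Rightarrow> nat \<Rightarrow> nat \<Rightarrow> bool" where
  "cornersupport n R S j k \<longleftrightarrow>
     (\<exists>j' \<in> R. j' \<noteq> j \<and> (\<exists>k' \<in> cols n R. k' \<noteq> k \<and>
        S j' k' \<noteq> S j k \<and> S j' k = S j k \<and> S j k' = S j k))"

end

theory Submission
  imports Defs
begin

definition inn :: "nat \<Rightarrow> nat set \<Rightarrow> (nat \<Rightarrow> nat \<Rightarrow> nat) \<Rightarrow> nat \<Rightarrow> nat \<Rightarrow> bool" where
  "inn n R T u v \<longleftrightarrow> (is_cell n R u v \<and> T u v = 1) \<or> (is_cell n R v u \<and> T v u = 0)"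

locale ctx =
  fixes n :: nat and R :: "nat set" and T :: "nat \<Rightarrow> nat \<Rightarrow> nat"
  assumes fer: "ferrers n R" and ew: "T \<in> EWtab n R"
begin

lemma R_sub: "R \<subseteq> {0..n}" and zR: "0 \<in> R" and nR: "n \<notin> R"
  using fer by (auto simp: ferrers_def)

lemma T01: "is_cell n R i j \<Longrightarrow> T i j = 0 \<or> T i j = 1"
  using ew by (auto simp: EWtab_def)

lemma top1: "j \<in> cols n R \<Longrightarrow> T 0 j = 1"
  using ew by (auto simp: EWtab_def)

lemma rowz: "i \<in> R - {0} \<Longrightarrow> \<exists>j. is_cell n R i j \<and> T i j = 0"
  using ew by (auto simp: EWtab_def)

lemma noEW: "is_cell n R i1 j1 \<Longrightarrow> is_cell n R i1 j2 \<Longrightarrow> is_cell n R i2 j1 \<Longrightarrow>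
        is_cell n R i2 j2 \<Longrightarrow> i1 \<noteq> i2 \<Longrightarrow> j1 \<noteq> j2 \<Longrightarrow>
        T i1 j1 = 0 \<Longrightarrow> T i2 j2 = 0 \<Longrightarrow> T i1 j2 = 1 \<Longrightarrow> T i2 j1 = 1 \<Longrightarrow> False"
  using ew unfolding EWtab_def by blast

lemma cell_range: "is_cell n R i j \<Longrightarrow> i \<in> R \<and> j \<in> cols n R \<and> i < j \<and> j \<le> n"
  by (auto simp: is_cell_def cols_def)

lemma adj_range: "adj n R w v \<Longrightarrow> w \<le> n \<and> v \<le> n"
  by (auto simp: adj_def is_cell_def cols_def)

lemma adj_types: "adj n R w v \<Longrightarrow> (w \<in> R \<and> v \<notin> R) \<or> (w \<notin> R \<and> v \<in> R)"
  by (auto simp: adj_def is_cell_def cols_def)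

lemma deg_col: "v \<in> cols n R \<Longrightarrow> deg n R v = card {i. is_cell n R i v}"
  unfolding deg_def
  by (rule arg_cong[where f=card]) (auto simp: adj_def is_cell_def cols_def)

lemma deg_row: "v \<in> R \<Longrightarrow> deg n R v = card {j. is_cell n R v j}"
  unfolding deg_def
  by (rule arg_cong[where f=card]) (auto simp: adj_def is_cell_def cols_def)

lemma fin_cellc: "finite {i. is_cell n R i v}"
  by (rule finite_subset[of _ "{0..n}"]) (auto dest: cell_range)
lemma fin_cellr: "finite {j. is_cell n R v j}"
  by (rule finite_subset[of _ "{0..n}"]) (auto dest: cell_range)

lemma c_lt_deg: "v \<in> cols n R \<union> (R - {0}) \<Longrightarrow> phi_TC n R T v < deg n R v"
proof -
  assume v: "v \<in> cols n R \<union> (R - {0})"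
  show ?thesis
  proof (cases "v \<in> R")
    case True
    then have vr: "v \<in> R - {0}" using v by (auto simp: cols_def)
    obtain j where j: "is_cell n R v j" "T v j = 0" using rowz[OF vr] by blast
    have "{j. is_cell n R v j \<and> T v j = 1} \<subset> {j. is_cell n R v j}" using j by force
    then have "card {j. is_cell n R v j \<and> T v j = 1} < card {j. is_cell n R v j}"
      by (rule psubset_card_mono[OF fin_cellr])
    then show ?thesis using True by (simp add: phi_TC_def deg_row)
  next
    case False
    then have vc: "v \<in> cols n R" using v by auto
    then have "is_cell n R 0 v" using zR False by (auto simp: is_cell_def cols_def intro!: Nat.gr0I)
    moreover have "T 0 v = 1" using top1 vc .
    ultimately have "{i. is_cell n R i v \<and> T i v = 0} \<subset> {i. is_cell n R i v}" by force
    then have "card {i. is_cell n R i v \<and> T i v = 0} < card {i. is_cell n R i v}"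
      by (rule psubset_card_mono[OF fin_cellc])
    then show ?thesis using False vc by (simp add: phi_TC_def deg_col)
  qed
qed


lemma no_closed:
  "finite Y \<Longrightarrow> Y \<noteq> {} \<Longrightarrow> Y \<subseteq> {0..n} - {0} \<Longrightarrow> \<forall>v\<in>Y. \<exists>u\<in>Y. inn n R T u v \<Longrightarrow> False"
proof (induction "card Y" arbitrary: Y rule: less_induct)
  case less
  note cl = less.prems(4)
  show False
  proof (cases "Y \<inter> R = {}")
    case True
    obtain v where v: "v \<in> Y" using less.prems(2) by blast
    then obtain u where "u \<in> Y" "inn n R T u v" using cl by blast
    then show False using True v by (auto simp: inn_def is_cell_def)
  next
    case False
    define i0 where "i0 = Min (Y \<inter> R)"
    have fin: "finite (Y \<inter> R)" using less.prems(1) by simp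
    have i0Y: "i0 \<in> Y" "i0 \<in> R" using Min_in[OF fin False] unfolding i0_def by auto
    have i0min: "\<And>i. i \<in> Y \<Longrightarrow> i \<in> R \<Longrightarrow> i0 \<le> i" unfolding i0_def using fin by auto
    obtain b where b: "b \<in> Y" "inn n R T b i0" using cl i0Y by blast
    have bc: "is_cell n R i0 b" "T i0 b = 0" using b(2) i0Y(2)
      by (auto simp: inn_def is_cell_def cols_def)
    define Y' where "Y' = {b \<in> Y. is_cell n R i0 b \<and> T i0 b = 0} \<union>
       {i \<in> Y. i \<noteq> i0 \<and> (\<exists>b\<in>Y. is_cell n R i0 b \<and> T i0 b = 0 \<and> is_cell n R i b \<and> T i b = 1)}"
    have sub: "Y' \<subseteq> Y - {i0}" unfolding Y'_def using bc by (auto simp: is_cell_def)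
    have lt: "card Y' < card Y"
    proof (rule psubset_card_mono[OF less.prems(1)])
      show "Y' \<subset> Y" using sub i0Y by blast
    qed
    have ne: "Y' \<noteq> {}" using b bc unfolding Y'_def by blast
    have fin': "finite Y'" using sub less.prems(1) by (meson finite_Diff rev_finite_subset)
    have cl': "\<forall>v\<in>Y'. \<exists>u\<in>Y'. inn n R T u v"
    proof
      fix v assume vY': "v \<in> Y'"
      show "\<exists>u\<in>Y'. inn n R T u v"
      proof (cases "v \<in> {b \<in> Y. is_cell n R i0 b \<and> T i0 b = 0}")
        case True
        then have vY: "v \<in> Y" and vc: "is_cell n R i0 v" "T i0 v = 0" by auto
        obtain u where u: "u \<in> Y" "inn n R T u v" using cl vY by blast
        have uc: "is_cell n R u v" "T u v = 1" using u(2) vc(1)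
          by (auto simp: inn_def is_cell_def cols_def)
        have "u \<noteq> i0" using uc vc by auto
        then have "u \<in> Y'" unfolding Y'_def using u(1) vY vc uc by blast
        then show ?thesis using u(2) by blast
      next
        case False
        then obtain b where vY: "v \<in> Y" and vi0: "v \<noteq> i0" and bY: "b \<in> Y"
          and bc: "is_cell n R i0 b" "T i0 b = 0" "is_cell n R v b" "T v b = 1"
          using vY' unfolding Y'_def by blast
        obtain u where u: "u \<in> Y" "inn n R T u v" using cl vY by blast
        have uc: "is_cell n R v u" "T v u = 0" using u(2) bc(3)
          by (auto simp: inn_def is_cell_def cols_def)
        have "i0 \<le> v" using i0min vY bc(3) by (auto simp: is_cell_def)
        then have "i0 < v" using vi0 by simp
        then have c0: "is_cell n R i0 u" using uc(1) i0Y(2) by (auto simp: is_cell_def)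
        have "T i0 u = 0"
        proof (rule ccontr)
          assume "T i0 u \<noteq> 0"
          then have "T i0 u = 1" using T01[OF c0] by simp
          then show False
          proof -
            have "b \<noteq> u" using bc(4) uc(2) by auto
            then show False using noEW[of i0 b u v] bc c0 uc vi0 \<open>T i0 u = 1\<close> by auto
          qed
        qed
        then have "u \<in> Y'" unfolding Y'_def using u(1) c0 by blast
        then show ?thesis using u(2) by blast
      qed
    qed
    show False using less.hyps[OF lt fin' ne _ cl'] sub less.prems(3) by blast
  qed
qed


definition blk where "blk k = snd (canon_step n R (phi_TC n R T) k)"
definition dd where "dd k = fst (canon_step n R (phi_TC n R T) k)"
definition Xs where "Xs t = (\<Union>k\<in>{..t}. blk k)"
definition tp where "tp t = (if even t then cols n R else R - {0})"

lemma blk0: "blk 0 = {0}" by (simp add: blk_def)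
lemma dd0: "dd 0 = sink_topple n R (phi_TC n R T)" by (simp add: dd_def)
lemma blkS: "blk (Suc t) = {v \<in> tp t. deg n R v \<le> dd t v}"
  by (simp add: blk_def dd_def tp_def Let_def)
lemma ddS: "dd (Suc t) = topple_set n R (blk (Suc t)) (dd t)"
  by (simp add: blk_def dd_def tp_def Let_def)
lemma Xs0: "Xs 0 = {0}" by (simp add: Xs_def blk0)
lemma XsS: "Xs (Suc t) = Xs t \<union> blk (Suc t)"
  by (simp add: Xs_def atMost_Suc Un_commute)
lemma tp_sub: "tp t \<subseteq> cols n R \<union> (R - {0})" by (auto simp: tp_def)
lemma tp_range: "tp t \<subseteq> {0..n}" using R_sub by (auto simp: tp_def cols_def)
lemma tp_nz: "v \<in> tp t \<Longrightarrow> v \<noteq> 0" using zR by (auto simp: tp_def cols_def split: if_splits intro!: Nat.gr0I)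
lemma tp_noadj: "w \<in> tp t \<Longrightarrow> v \<in> tp t \<Longrightarrow> \<not> adj n R w v"
  using adj_types by (auto simp: tp_def cols_def split: if_splits)
lemma blkS_sub: "blk (Suc t) \<subseteq> tp t" by (auto simp: blkS)
lemma blk_range: "blk k \<subseteq> {0..n}"
  using tp_range blkS_sub by (cases k) (auto simp: blk0)
lemma Xs_range: "Xs t \<subseteq> {0..n}" using blk_range by (auto simp: Xs_def)
lemma fin_Xs: "finite (Xs t)" using Xs_range by (meson finite_atLeastAtMost rev_finite_subset)
lemma fin_blk: "finite (blk t)" using blk_range by (meson finite_atLeastAtMost rev_finite_subset)

lemma card_adj_le: "A \<subseteq> {0..n} \<Longrightarrow> card {w \<in> A. adj n R w v} \<le> deg n R v"
  unfolding deg_def by (rule card_mono) auto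

lemma inv: "(\<forall>v. v \<noteq> 0 \<longrightarrow> dd t v + (if v \<in> Xs t then deg n R v else 0)
              = phi_TC n R T v + card {w \<in> Xs t. adj n R w v})"
proof (induction t)
  case 0
  show ?case
  proof (intro allI impI)
    fix v :: nat assume "v \<noteq> 0"
    have "{w \<in> {0}. adj n R w v} = (if adj n R 0 v then {0} else {})" by auto
    then show "dd 0 v + (if v \<in> Xs 0 then deg n R v else 0) = phi_TC n R T v + card {w \<in> Xs 0. adj n R w v}"
      using \<open>v \<noteq> 0\<close> by (simp add: dd0 Xs0 sink_topple_def)
  qed
next
  case (Suc t)
  define A where "A = blk (Suc t)"
  have disj: "A \<inter> Xs t = {}"
  proof (rule ccontr)
    assume "A \<inter> Xs t \<noteq> {}"
    then obtain v where v: "v \<in> A" "v \<in> Xs t" by blast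
    have vt: "v \<in> tp t" using v(1) blkS_sub A_def by blast
    have "dd t v + deg n R v = phi_TC n R T v + card {w \<in> Xs t. adj n R w v}"
      using Suc.IH[rule_format, OF tp_nz[OF vt]] v(2) by simp
    moreover have "card {w \<in> Xs t. adj n R w v} \<le> deg n R v" using card_adj_le[OF Xs_range] .
    moreover have "phi_TC n R T v < deg n R v" using c_lt_deg tp_sub vt by blast
    moreover have "deg n R v \<le> dd t v" using v(1) by (simp add: A_def blkS)
    ultimately show False by linarith
  qed
  show ?case
  proof (intro allI impI)
    fix v :: nat assume v0: "v \<noteq> 0"
    have un: "{w \<in> Xs (Suc t). adj n R w v} = {w \<in> Xs t. adj n R w v} \<union> {w \<in> A. adj n R w v}"
      by (auto simp: XsS A_def)
    have cu: "card {w \<in> Xs (Suc t). adj n R w v} = card {w \<in> Xs t. adj n R w v} + card {w \<in> A. adj n R w v}"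
      unfolding un by (rule card_Un_disjoint) (use disj fin_Xs fin_blk A_def in auto)
    have IH: "dd t v + (if v \<in> Xs t then deg n R v else 0) = phi_TC n R T v + card {w \<in> Xs t. adj n R w v}"
      using Suc.IH[rule_format, OF v0] by simp
    have d': "dd (Suc t) v = dd t v - (if v \<in> A then deg n R v else 0) + card {w \<in> A. adj n R w v}"
      by (simp add: ddS topple_set_def A_def)
    show "dd (Suc t) v + (if v \<in> Xs (Suc t) then deg n R v else 0) = phi_TC n R T v + card {w \<in> Xs (Suc t). adj n R w v}"
    proof (cases "v \<in> A")
      case True
      then have "v \<notin> Xs t" "deg n R v \<le> dd t v" using disj by (auto simp: A_def blkS)
      then show ?thesis using IH d' cu True by (simp add: XsS A_def[symmetric])
    next
      case False
      then show ?thesis using IH d' cu by (simp add: XsS A_def[symmetric])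
    qed
  qed
qed

lemma disj: "blk (Suc t) \<inter> Xs t = {}"
proof (rule ccontr)
  assume "blk (Suc t) \<inter> Xs t \<noteq> {}"
  then obtain v where v: "v \<in> blk (Suc t)" "v \<in> Xs t" by blast
  have vt: "v \<in> tp t" using v(1) blkS_sub by blast
  have "dd t v + deg n R v = phi_TC n R T v + card {w \<in> Xs t. adj n R w v}"
    using inv[of t, rule_format, OF tp_nz[OF vt]] v(2) by simp
  moreover have "card {w \<in> Xs t. adj n R w v} \<le> deg n R v" using card_adj_le[OF Xs_range] .
  moreover have "phi_TC n R T v < deg n R v" using c_lt_deg tp_sub vt by blast
  moreover have "deg n R v \<le> dd t v" using v(1) by (simp add: blkS)
  ultimately show False by linarith
qed

lemma blk_char: "v \<in> blk (Suc t) \<longleftrightarrow> v \<in> tp t \<and> v \<notin> Xs t \<and>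
    deg n R v \<le> phi_TC n R T v + card {w \<in> Xs t. adj n R w v}"
proof
  assume v: "v \<in> blk (Suc t)"
  then have "v \<in> tp t" "v \<notin> Xs t" using blkS_sub disj by auto
  moreover have "deg n R v \<le> dd t v" using v by (simp add: blkS)
  ultimately show "v \<in> tp t \<and> v \<notin> Xs t \<and> deg n R v \<le> phi_TC n R T v + card {w \<in> Xs t. adj n R w v}"
    using inv[of t, rule_format, OF tp_nz[of v t]] by simp
next
  assume v: "v \<in> tp t \<and> v \<notin> Xs t \<and> deg n R v \<le> phi_TC n R T v + card {w \<in> Xs t. adj n R w v}"
  then have "dd t v = phi_TC n R T v + card {w \<in> Xs t. adj n R w v}"
    using inv[of t, rule_format, OF tp_nz[of v t]] by simp
  then show "v \<in> blk (Suc t)" using v by (simp add: blkS)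
qed


lemma blk_sub_Xs: "k \<le> t \<Longrightarrow> blk k \<subseteq> Xs t" by (auto simp: Xs_def)

lemma blk_first: "v \<in> blk k \<Longrightarrow> s < k \<Longrightarrow> v \<notin> blk s"
proof (cases k)
  case (Suc t)
  assume "v \<in> blk k" "s < k"
  then show ?thesis using disj[of t] blk_sub_Xs[of s t] Suc by auto
qed simp

lemma bi_eq: "v \<in> blk k \<Longrightarrow> block_index n R (phi_TC n R T) v = k"
  unfolding block_index_def blk_def[symmetric]
  by (rule Least_equality) (auto dest: blk_first simp: not_le[symmetric])

lemma gap: "blk (Suc t) = {} \<Longrightarrow> blk (Suc (Suc t)) = {}"
proof (rule ccontr)
  assume e: "blk (Suc t) = {}" and "blk (Suc (Suc t)) \<noteq> {}"
  then obtain v where v: "v \<in> blk (Suc (Suc t))" by blast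
  have XS: "Xs (Suc t) = Xs t" using e by (simp add: XsS)
  from v have vt: "v \<in> tp (Suc t)" and vX: "v \<notin> Xs t"
    and dg: "deg n R v \<le> phi_TC n R T v + card {w \<in> Xs t. adj n R w v}"
    unfolding blk_char XS by auto
  show False
  proof (cases t)
    case 0
    have "v \<in> R" using vt 0 by (simp add: tp_def)
    have "\<not> adj n R 0 v" using adj_types[of 0 v] zR \<open>v \<in> R\<close> by blast
    then have "{w \<in> Xs t. adj n R w v} = {}" using 0 by (auto simp: Xs0)
    then have "card {w \<in> Xs t. adj n R w v} = 0" by (simp only: card.empty)
    moreover have "phi_TC n R T v < deg n R v" using c_lt_deg[of v] vt tp_sub by blast
    ultimately show False using dg by simp
  next
    case (Suc t')
    have vt': "v \<in> tp t'" using vt Suc by (simp add: tp_def)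
    have "{w \<in> Xs t. adj n R w v} = {w \<in> Xs t'. adj n R w v}"
      using Suc blkS_sub[of t'] tp_noadj[OF _ vt'] by (auto simp: XsS)
    moreover have "v \<notin> Xs t'" using vX Suc by (simp add: XsS)
    ultimately have "v \<in> blk (Suc t')" using blk_char vt' dg by simp
    then show False using vX Suc by (simp add: XsS)
  qed
qed

lemma gap_all: "blk (Suc t) = {} \<Longrightarrow> blk (Suc t + i) = {}"
proof (induction i)
  case (Suc i)
  then have "blk (Suc (t + i)) = {}" by simp
  then have "blk (Suc (Suc (t + i))) = {}" by (rule gap)
  then show ?case by simp
qed simp

lemma nonempty_before: "blk m \<noteq> {} \<Longrightarrow> k \<le> m \<Longrightarrow> blk k \<noteq> {}"
proof (cases k)
  case 0 then show ?thesis by (simp add: blk0)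
next
  case (Suc t)
  assume "blk m \<noteq> {}" "k \<le> m"
  show ?thesis
  proof
    assume "blk k = {}"
    then have "blk (Suc t + (m - Suc t)) = {}" using gap_all[of t "m - Suc t"] Suc by simp
    moreover have "Suc t + (m - Suc t) = m" using Suc \<open>k \<le> m\<close> by simp
    ultimately show False using \<open>blk m \<noteq> {}\<close> by simp
  qed
qed

lemma card_Xs: "(\<forall>k\<le>t. blk k \<noteq> {}) \<Longrightarrow> Suc t \<le> card (Xs t)"
proof (induction t)
  case 0 then show ?case by (simp add: Xs0)
next
  case (Suc t)
  have "card (Xs (Suc t)) = card (Xs t) + card (blk (Suc t))"
    unfolding XsS by (rule card_Un_disjoint) (use fin_Xs fin_blk disj in auto)
  moreover have "card (blk (Suc t)) \<ge> 1" using Suc.prems fin_blk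
    by (metis One_nat_def Suc_leI card_gt_0_iff le_refl)
  ultimately show ?case using Suc by auto
qed

lemma late_empty: "blk (Suc n) = {}"
proof (rule ccontr)
  assume "blk (Suc n) \<noteq> {}"
  then have "\<forall>k\<le>Suc n. blk k \<noteq> {}" using nonempty_before by blast
  then have "Suc (Suc n) \<le> card (Xs (Suc n))" by (rule card_Xs)
  moreover have "card (Xs (Suc n)) \<le> Suc n" using card_mono[OF _ Xs_range] by fastforce
  ultimately show False by simp
qed

lemma total: "v \<le> n \<Longrightarrow> \<exists>k. v \<in> blk k"
proof (rule ccontr)
  assume vn: "v \<le> n" and nk: "\<nexists>k. v \<in> blk k"
  have e1: "blk (Suc n) = {}" by (rule late_empty)
  have e2: "blk (Suc (Suc n)) = {}" using gap[OF e1] .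
  have X1: "Xs (Suc n) = Xs n" using e1 by (simp add: XsS)
  define Y where "Y = {0..n} - Xs n"
  have vY: "v \<in> Y" using vn nk unfolding Y_def Xs_def by auto
  have Ysub: "Y \<subseteq> {0..n} - {0}" using blk_sub_Xs[of 0 n] by (auto simp: Y_def blk0)
  have stab: "phi_TC n R T y + card {w \<in> Xs n. adj n R w y} < deg n R y" if yY: "y \<in> Y" for y
  proof -
    have "y \<in> cols n R \<union> (R - {0})" using yY Ysub by (auto simp: cols_def)
    then have "y \<in> tp n \<or> y \<in> tp (Suc n)" by (auto simp: tp_def)
    moreover have "y \<notin> Xs n" using yY Y_def by auto
    ultimately show ?thesis using e1 e2 blk_char[of y n] blk_char[of y "Suc n"] X1 by force
  qed
  have cl: "\<forall>y\<in>Y. \<exists>u\<in>Y. inn n R T u y"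
  proof
    fix y assume yY: "y \<in> Y"
    have st: "phi_TC n R T y + card {w \<in> Xs n. adj n R w y} < deg n R y" using stab yY .
    show "\<exists>u\<in>Y. inn n R T u y"
    proof (rule ccontr)
      assume no: "\<not> (\<exists>u\<in>Y. inn n R T u y)"
      show False
      proof (cases "y \<in> R")
        case True
        have "{j. is_cell n R y j} \<subseteq> {j. is_cell n R y j \<and> T y j = 1} \<union> {w \<in> Xs n. adj n R w y}"
        proof
          fix j assume j: "j \<in> {j. is_cell n R y j}"
          show "j \<in> {j. is_cell n R y j \<and> T y j = 1} \<union> {w \<in> Xs n. adj n R w y}"
          proof (cases "j \<in> Xs n")
            case True then show ?thesis using j by (auto simp: adj_def)
          next
            case False
            then have "j \<in> Y" using j cell_range Y_def by auto
            then have "T y j \<noteq> 0" using no j by (auto simp: inn_def)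
            then have "T y j = 1" using T01[of y j] j by auto
            then show ?thesis using j by simp
          qed
        qed
        then have "card {j. is_cell n R y j} \<le> card ({j. is_cell n R y j \<and> T y j = 1} \<union> {w \<in> Xs n. adj n R w y})"
          by (rule card_mono[rotated]) (use fin_cellr fin_Xs in auto)
        also have "\<dots> \<le> card {j. is_cell n R y j \<and> T y j = 1} + card {w \<in> Xs n. adj n R w y}"
          by (rule card_Un_le)
        finally show False using st True by (simp add: phi_TC_def deg_row)
      next
        case False
        then have yc: "y \<in> cols n R" using yY Y_def by (auto simp: cols_def)
        have "{i. is_cell n R i y} \<subseteq> {i. is_cell n R i y \<and> T i y = 0} \<union> {w \<in> Xs n. adj n R w y}"
        proof
          fix j assume j: "j \<in> {i. is_cell n R i y}"
          show "j \<in> {i. is_cell n R i y \<and> T i y = 0} \<union> {w \<in> Xs n. adj n R w y}"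
          proof (cases "j \<in> Xs n")
            case True then show ?thesis using j by (auto simp: adj_def)
          next
            case False
            moreover have "j \<le> n" using cell_range[of j y] j by simp
            ultimately have "j \<in> Y" using Y_def by auto
            then have "T j y \<noteq> 1" using no j by (auto simp: inn_def)
            then have "T j y = 0" using T01[of j y] j by auto
            then show ?thesis using j by simp
          qed
        qed
        then have "card {i. is_cell n R i y} \<le> card ({i. is_cell n R i y \<and> T i y = 0} \<union> {w \<in> Xs n. adj n R w y})"
          by (rule card_mono[rotated]) (use fin_cellc fin_Xs in auto)
        also have "\<dots> \<le> card {i. is_cell n R i y \<and> T i y = 0} + card {w \<in> Xs n. adj n R w y}"
          by (rule card_Un_le)
        finally show False using st False yc by (simp add: phi_TC_def deg_col)
      qed
    qed
  qed
  have "finite Y" unfolding Y_def by simp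
  then show False using no_closed[of Y] vY Ysub cl by auto
qed


definition bi where "bi v = block_index n R (phi_TC n R T) v"

lemma suppl_eq: "suppl n R T i j = (if bi i < bi j then 1 else 0)"
  by (simp add: suppl_def bi_def)

lemma bi_blk: "v \<in> blk k \<Longrightarrow> bi v = k" by (simp add: bi_def bi_eq)

lemma bi_in: "v \<le> n \<Longrightarrow> v \<in> blk (bi v)"
  using total bi_blk by blast

lemma blk_par: "v \<in> blk k \<Longrightarrow> (v \<in> R \<and> even k) \<or> (v \<in> cols n R \<and> odd k)"
proof (cases k)
  case 0
  assume "v \<in> blk k" then show ?thesis using 0 zR by (simp add: blk0)
next
  case (Suc t)
  assume "v \<in> blk k"
  then have "v \<in> tp t" using blkS_sub Suc by blast
  then show ?thesis using Suc by (auto simp: tp_def split: if_splits)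
qed

lemma row_even: "v \<in> R \<Longrightarrow> even (bi v)"
  using blk_par[OF bi_in[of v]] R_sub by (auto simp: cols_def)
lemma col_odd: "v \<in> cols n R \<Longrightarrow> odd (bi v)"
  using blk_par[OF bi_in[of v]] by (auto simp: cols_def)

lemma blk_row: "v \<in> blk (Suc (Suc (2*m))) \<Longrightarrow> v \<in> R"
  using blkS_sub[of "Suc (2*m)"] by (auto simp: tp_def)
lemma blk_col: "v \<in> blk (Suc (2*m)) \<Longrightarrow> v \<in> cols n R"
  using blkS_sub[of "2*m"] by (auto simp: tp_def)

lemma canonU: "canon_U n R (phi_TC n R T) l = blk (2*l)" by (simp add: canon_U_def blk_def)
lemma canonV: "canon_V n R (phi_TC n R T) l = (if l = 0 then {} else blk (2*l - 1))"
  by (simp add: canon_V_def blk_def)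

lemma partA:
  assumes j: "j \<in> canon_U n R (phi_TC n R T) l" and k: "k \<in> cols n R"
  shows "k \<in> canon_V n R (phi_TC n R T) l \<longleftrightarrow>
               suppl n R T j k = 0 \<and> \<not> cornersupport n R (suppl n R T) j k"
proof -
  have jb: "j \<in> blk (2*l)" using j canonU by simp
  have bj: "bi j = 2*l" using bi_blk[OF jb] .
  have kn: "k \<le> n" using k by (simp add: cols_def)
  obtain m where bk: "bi k = Suc (2*m)" using col_odd[OF k] by (metis oddE Suc_eq_plus1)
  show ?thesis
  proof
    assume kv: "k \<in> canon_V n R (phi_TC n R T) l"
    then have l0: "l \<noteq> 0" and kb: "k \<in> blk (2*l - 1)" using canonV by (auto split: if_splits)
    have bk': "bi k = 2*l - 1" using bi_blk[OF kb] .
    have s0: "suppl n R T j k = 0" using bj bk' by (simp add: suppl_eq)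
    have "\<not> cornersupport n R (suppl n R T) j k"
    proof
      assume "cornersupport n R (suppl n R T) j k"
      then obtain j' k' where j': "j' \<in> R" and k': "k' \<in> cols n R"
        and c: "suppl n R T j' k' \<noteq> 0" "suppl n R T j' k = 0" "suppl n R T j k' = 0"
        unfolding cornersupport_def s0 by blast
      obtain a where a: "bi j' = 2*a" using row_even[OF j'] by (metis evenE)
      obtain b where b: "bi k' = Suc (2*b)" using col_odd[OF k'] by (metis oddE Suc_eq_plus1)
      have "bi j' < bi k'" "\<not> bi j' < bi k" "\<not> bi j < bi k'" using c by (auto simp: suppl_eq split: if_splits)
      then show False using a b bk' bj l0 by presburger
    qed
    then show "suppl n R T j k = 0 \<and> \<not> cornersupport n R (suppl n R T) j k" using s0 by simp
  next
    assume h: "suppl n R T j k = 0 \<and> \<not> cornersupport n R (suppl n R T) j k"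
    then have "\<not> bi j < bi k" by (simp add: suppl_eq split: if_splits)
    then have le: "Suc (2*m) < 2*l" using bj bk by presburger
    show "k \<in> canon_V n R (phi_TC n R T) l"
    proof (cases "Suc (2*m) = 2*l - 1")
      case True
      then show ?thesis using bi_in[OF kn] bk le canonV by auto
    next
      case False
      then have ml: "Suc (Suc (2*m)) < 2*l" using le by presburger
      have ne: "blk (2*l) \<noteq> {}" using jb by blast
      obtain j' where j': "j' \<in> blk (Suc (Suc (2*m)))"
        using nonempty_before[OF ne, of "Suc (Suc (2*m))"] ml by auto
      obtain k' where k': "k' \<in> blk (Suc (2*(Suc m)))"
        using nonempty_before[OF ne, of "Suc (2*(Suc m))"] ml by auto
      have bj': "bi j' = Suc (Suc (2*m))" using bi_blk[OF j'] .
      have bk': "bi k' = Suc (2*(Suc m))" using bi_blk[OF k'] .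
      have "cornersupport n R (suppl n R T) j k"
        unfolding cornersupport_def
      proof (intro bexI conjI)
        show "j' \<in> R" using blk_row[OF j'] .
        show "k' \<in> cols n R" using blk_col[OF k'] .
        show "j' \<noteq> j" using bj' bj ml by auto
        show "k' \<noteq> k" using bk' bk by auto
        show "suppl n R T j' k' \<noteq> suppl n R T j k" using h bj' bk' by (simp add: suppl_eq)
        show "suppl n R T j' k = suppl n R T j k" using h bj' bk by (simp add: suppl_eq)
        show "suppl n R T j k' = suppl n R T j k" using h bj bk' ml by (simp add: suppl_eq)
      qed
      then show ?thesis using h by simp
    qed
  qed
qed

lemma partB:
  assumes j: "j \<in> canon_V n R (phi_TC n R T) l" and k: "k \<in> R"
  shows "k \<in> canon_U n R (phi_TC n R T) (l - 1) \<longleftrightarrow>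
               suppl n R T k j = 1 \<and> \<not> cornersupport n R (suppl n R T) k j"
proof -
  have l0: "l \<noteq> 0" and jb0: "j \<in> blk (2*l - 1)" using j canonV by (auto split: if_splits)
  obtain L where lL: "l = Suc L" using l0 not0_implies_Suc by blast
  have jb: "j \<in> blk (Suc (2*L))" using jb0 lL by simp
  have bj: "bi j = Suc (2*L)" using bi_blk[OF jb] .
  have kn: "k \<le> n" using k R_sub by auto
  obtain m where bk: "bi k = 2*m" using row_even[OF k] by (metis evenE)
  have UL: "canon_U n R (phi_TC n R T) (l - 1) = blk (2*L)" using canonU lL by simp
  show ?thesis
  proof
    assume "k \<in> canon_U n R (phi_TC n R T) (l - 1)"
    then have kb: "k \<in> blk (2*L)" using UL by simp
    have bk': "bi k = 2*L" using bi_blk[OF kb] .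
    have s1: "suppl n R T k j = 1" using bj bk' by (simp add: suppl_eq)
    have "\<not> cornersupport n R (suppl n R T) k j"
    proof
      assume "cornersupport n R (suppl n R T) k j"
      then obtain j' k' where
        c: "suppl n R T j' k' \<noteq> suppl n R T k j" "suppl n R T j' j = suppl n R T k j" "suppl n R T k k' = suppl n R T k j"
        unfolding cornersupport_def by blast
      have c1: "suppl n R T j' k' \<noteq> 1" "suppl n R T j' j = 1" "suppl n R T k k' = 1" using c s1 by auto
      have "\<not> bi j' < bi k'" using c1(1) by (simp add: suppl_eq split: if_splits)
      moreover have "bi j' < bi j" using c1(2) by (simp add: suppl_eq split: if_splits)
      moreover have "bi k < bi k'" using c1(3) by (simp add: suppl_eq split: if_splits)
      ultimately show False using bk' bj by linarith
    qed
    then show "suppl n R T k j = 1 \<and> \<not> cornersupport n R (suppl n R T) k j" using s1 by simp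
  next
    assume h: "suppl n R T k j = 1 \<and> \<not> cornersupport n R (suppl n R T) k j"
    then have "bi k < bi j" by (simp add: suppl_eq split: if_splits)
    then have le: "m \<le> L" using bj bk by linarith
    show "k \<in> canon_U n R (phi_TC n R T) (l - 1)"
    proof (cases "m = L")
      case True
      then show ?thesis using bi_in[OF kn] bk UL by auto
    next
      case False
      then have ml: "Suc (Suc (2*m)) < Suc (2*L)" using le by linarith
      have ne: "blk (Suc (2*L)) \<noteq> {}" using jb by blast
      obtain j' where j': "j' \<in> blk (Suc (Suc (2*m)))"
        using nonempty_before[OF ne, of "Suc (Suc (2*m))"] ml by auto
      obtain k' where k': "k' \<in> blk (Suc (2*m))"
        using nonempty_before[OF ne, of "Suc (2*m)"] ml by auto
      have bj': "bi j' = Suc (Suc (2*m))" using bi_blk[OF j'] .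
      have bk': "bi k' = Suc (2*m)" using bi_blk[OF k'] .
      have "cornersupport n R (suppl n R T) k j"
        unfolding cornersupport_def
      proof (intro bexI conjI)
        show "j' \<in> R" using blk_row[OF j'] .
        show "k' \<in> cols n R" using blk_col[OF k'] .
        show "j' \<noteq> k" using bj' bk by auto
        show "k' \<noteq> j" using bk' bj ml by auto
        show "suppl n R T j' k' \<noteq> suppl n R T k j" using h bj' bk' by (simp add: suppl_eq)
        show "suppl n R T j' j = suppl n R T k j" using h bj' bj ml by (simp add: suppl_eq)
        show "suppl n R T k k' = suppl n R T k j" using h bk bk' by (simp add: suppl_eq)
      qed
      then show ?thesis using h by simp
    qed
  qed
qed

end

theorem lemma4p9:
  fixes n :: nat and R :: "nat set" and T :: "nat \<Rightarrow> nat \<Rightarrow> nat"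
  assumes "ferrers n R"
    and "T \<in> EWtab n R"
  shows "(\<forall>l j k. j \<in> canon_U n R (phi_TC n R T) l \<and> k \<in> cols n R \<and> j < k \<longrightarrow>
            (k \<in> canon_V n R (phi_TC n R T) l \<longleftrightarrow>
               suppl n R T j k = 0 \<and> \<not> cornersupport n R (suppl n R T) j k))
       \<and> (\<forall>l j k. j \<in> canon_V n R (phi_TC n R T) l \<and> k \<in> R \<and> k < j \<longrightarrow>
            (k \<in> canon_U n R (phi_TC n R T) (l - 1) \<longleftrightarrow>
               suppl n R T k j = 1 \<and> \<not> cornersupport n R (suppl n R T) k j))"
proof -
  interpret ctx n R T using assms by (rule ctx.intro)
  show ?thesis using partA partB by blast
qed

end
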